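(* Let $\Lambda$ denote the von Mangoldt function and let $\varepsilon>0$ be a small number. Then, as $x\to\infty$, \[ \sum_{n\leq x} \Lambda\left( [x/n]+1 \right) = c_0 x + O\left( x^{(2+\varepsilon)/3}\log^2 x \right), \] where the density constant is \[ c_0=\sum_{n\geq 1}\frac{\Lambda(n+1)}{n(n+1)}\geq 0.7553658. \]
   Context: $[t]$ denotes the largest integer not exceeding $t$. The von Mangoldt function is $\Lambda(m)=\log p$ if $m=p^k$ for a prime $p$ and an integer $k\geq 1$, and $\Lambda(m)=0$ otherwise. The sum is over positive integers $n\le x$. *)

theory Defs
  imports "HOL-Number_Theory.Number_Theory" "HOL-Library.Landau_Symbols"
begin

text \<open>The density constant c0 = sum over n >= 1 of Lambda(n+1) / (n (n+1)),
  written with the shift n = Suc k so that the series is indexed from 0.\<close>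
definition c0_term :: "nat \<Rightarrow> real" where
  "c0_term k = mangoldt (Suc k + 1) / (real (Suc k) * real (Suc k + 1))"

definition c0 :: real where
  "c0 = (\<Sum>k. c0_term k)"

end

theory Submission
  imports Defs "HOL-Real_Asymp.Real_Asymp" "HOL-Analysis.Harmonic_Numbers"
begin


definition gt :: "nat \<Rightarrow> real" where "gt k = 1 / sqrt (real k + 1)"

lemma ln_le_2sqrt: assumes "y > 0" shows "ln y \<le> 2 * sqrt y"
proof -
  have "ln y = 2 * ln (sqrt y)" using assms by (simp add: ln_sqrt)
  also have "ln (sqrt y) \<le> sqrt y - 1" using assms by (intro ln_le_minus_one) auto
  finally show ?thesis by simp
qed

lemma c0_term_nonneg: "c0_term k \<ge> 0"
  unfolding c0_term_def by (simp add: mangoldt_nonneg)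

lemma c0_term_le: "c0_term k \<le> 6 * (gt k - gt (Suc k))"
proof -
  define d where "d = real k + 1"
  have d1: "d \<ge> 1" unfolding d_def by simp
  define sa where "sa = sqrt d"
  define ua where "ua = sqrt (d + 1)"
  have s0: "sa > 0" "sa^2 = d" unfolding sa_def using d1 by auto
  have u0: "ua > 0" "ua^2 = d + 1" unfolding ua_def using d1 by auto
  have u2s: "ua \<le> 2 * sa"
  proof -
    have "(2 * sa)^2 = 4 * sa^2" by (simp add: power_mult_distrib)
    hence "ua^2 \<le> (2 * sa)^2" using s0(2) u0(2) d1 by linarith
    from power2_le_imp_le[OF this] show ?thesis using s0(1) by simp
  qed
  have "c0_term k = mangoldt (Suc k + 1) / (d * (d+1))"
    unfolding c0_term_def d_def by (simp add: add.commute)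
  also have "\<dots> \<le> ln (d + 1) / (d * (d+1))"
    using mangoldt_le[of "Suc k + 1"] d1 unfolding d_def
    by (intro divide_right_mono) (auto simp: add.commute)
  also have "\<dots> \<le> 2 * ua / (d * (d+1))"
    using ln_le_2sqrt[of "d+1"] d1 unfolding ua_def by (intro divide_right_mono) auto
  also have "\<dots> = 2 * ua / (sa^2 * ua^2)" using s0 u0 by simp
  also have "\<dots> = 2 / (sa^2 * ua)"
  proof -
    have "sa^2 * ua^2 = (sa^2 * ua) * ua" by (simp add: power2_eq_square)
    thus ?thesis using s0(1) u0(1) by simp
  qed
  also have "\<dots> \<le> 6 * (1/sa - 1/ua)"
  proof -
    have "(ua - sa) * (ua + sa) = ua^2 - sa^2" by (simp add: algebra_simps power2_eq_square)
    also have "\<dots> = 1" using s0 u0 by simp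
    finally have us1: "(ua - sa) * (ua + sa) = 1" .
    have "1/sa - 1/ua = (ua - sa) / (sa * ua)" using s0(1) u0(1) by (simp add: field_simps)
    also have "\<dots> = (ua - sa) * (ua + sa) / (sa * ua * (ua + sa))" using s0(1) u0(1) by simp
    finally
    have "1/sa - 1/ua = 1 / (sa * ua * (ua + sa))" using us1 by simp
    hence "6 * (1/sa - 1/ua) = (6 * sa) / (sa^2 * ua * (ua + sa))" using s0(1) u0(1)
      by (simp add: power2_eq_square)
    moreover have "2 / (sa^2 * ua) = (2 * (ua + sa)) / (sa^2 * ua * (ua + sa))"
      using s0(1) u0(1) by (subst mult_divide_mult_cancel_right) auto
    moreover have "(2 * (ua + sa)) / (sa^2 * ua * (ua + sa)) \<le> (6 * sa) / (sa^2 * ua * (ua + sa))"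
      using s0(1) u0(1) u2s by (intro divide_right_mono) auto
    ultimately show "2 / (sa^2 * ua) \<le> 6 * (1/sa - 1/ua)" by simp
  qed
  also have "1/sa - 1/ua = gt k - gt (Suc k)"
    unfolding gt_def sa_def ua_def d_def by (simp add: add.commute add.left_commute)
  finally show ?thesis .
qed

lemma gt_lim: "gt \<longlonglongrightarrow> 0"
  unfolding gt_def by real_asymp

lemma tele: "(\<lambda>n. gt (n + D) - gt (Suc (n + D))) sums gt D"
proof -
  have "(\<lambda>n. gt (n + D)) \<longlonglongrightarrow> 0" using gt_lim by (rule LIMSEQ_ignore_initial_segment)
  from telescope_sums'[OF this] show ?thesis by simp
qed

lemma summable_c0: "summable c0_term"
proof (rule summable_comparison_test)
  show "\<exists>N. \<forall>n\<ge>N. norm (c0_term n) \<le> 6 * (gt n - gt (Suc n))"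
    using c0_term_le c0_term_nonneg by auto
  show "summable (\<lambda>n. 6 * (gt n - gt (Suc n)))"
    using tele[of 0] by (intro summable_mult) (simp add: sums_iff)
qed

lemma c0_nonneg: "c0 \<ge> 0"
  unfolding c0_def by (intro suminf_nonneg summable_c0 c0_term_nonneg)

lemma c0_tail: "c0 - (\<Sum>k<D. c0_term k) \<ge> 0 \<and> c0 - (\<Sum>k<D. c0_term k) \<le> 6 * gt D"
proof -
  have eq: "c0 - (\<Sum>k<D. c0_term k) = (\<Sum>n. c0_term (n + D))"
    unfolding c0_def using suminf_split_initial_segment[OF summable_c0, of D] by simp
  have sm: "summable (\<lambda>n. c0_term (n + D))"
    using summable_c0 by (subst summable_iff_shift) 
  have "(\<Sum>n. c0_term (n + D)) \<le> (\<Sum>n. 6 * (gt (n + D) - gt (Suc (n + D))))"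
  proof (rule suminf_le)
    show "summable (\<lambda>n. 6 * (gt (n + D) - gt (Suc (n + D))))"
      using tele[of D] by (intro summable_mult) (simp add: sums_iff)
  qed (use c0_term_le sm in auto)
  also have "\<dots> = 6 * gt D" by (rule sums_unique[symmetric, OF sums_mult[OF tele]])
  finally show ?thesis using eq sm by (auto intro: suminf_nonneg c0_term_nonneg)
qed



definition Sf :: "nat \<Rightarrow> real" where
  "Sf M = (\<Sum>n\<in>{1..M}. mangoldt (M div n + 1))"

lemma bv: "M div Suc (Suc D) < n \<Longrightarrow> n \<le> M div Suc D \<Longrightarrow> M div n = Suc D"
  by (metis less_eq_div_iff_mult_less_eq div_nat_eqI div_less_iff_less_mult zero_less_Suc)

lemma block:
  "(\<Sum>n\<in>{M div Suc D<..M}. (mangoldt (M div n + 1) :: real)) =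
   (\<Sum>d\<in>{1..D}. real (M div d - M div Suc d) * mangoldt (d + 1))"
proof (induction D)
  case 0
  then show ?case by simp
next
  case (Suc D)
  have le1: "M div Suc (Suc D) \<le> M div Suc D" by (rule div_le_mono2) auto
  have le2: "M div Suc D \<le> M" by simp
  have un: "{M div Suc (Suc D)<..M} = {M div Suc (Suc D)<..M div Suc D} \<union> {M div Suc D<..M}"
    using le1 le2 by (auto intro: order.trans[OF _ le2])
  have "(\<Sum>n\<in>{M div Suc (Suc D)<..M}. (mangoldt (M div n + 1) :: real))
      = (\<Sum>n\<in>{M div Suc (Suc D)<..M div Suc D}. mangoldt (M div n + 1))
        + (\<Sum>n\<in>{M div Suc D<..M}. mangoldt (M div n + 1))"
    unfolding un by (rule sum.union_disjoint) auto
  also have "(\<Sum>n\<in>{M div Suc (Suc D)<..M div Suc D}. (mangoldt (M div n + 1) :: real))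
      = (\<Sum>n\<in>{M div Suc (Suc D)<..M div Suc D}. mangoldt (Suc D + 1))"
    by (intro sum.cong refl) (auto simp: bv)
  also have "\<dots> = real (M div Suc D - M div Suc (Suc D)) * mangoldt (Suc D + 1)"
    by simp
  also note Suc.IH
  finally show ?case by (simp add: add.commute)
qed

lemma split_Sf:
  assumes "K \<le> M"
  shows "Sf M = (\<Sum>n\<in>{1..K}. mangoldt (M div n + 1)) + (\<Sum>n\<in>{K<..M}. mangoldt (M div n + 1))"
proof -
  have "{1..M} = {1..K} \<union> {K<..M}" using assms by auto
  moreover have "(\<Sum>n\<in>{1..K} \<union> {K<..M}. (mangoldt (M div n + 1) :: real)) =
    (\<Sum>n\<in>{1..K}. mangoldt (M div n + 1)) + (\<Sum>n\<in>{K<..M}. mangoldt (M div n + 1))"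
    by (rule sum.union_disjoint) auto
  ultimately show ?thesis unfolding Sf_def by simp
qed

lemma cd_bound:
  assumes "d \<ge> 1"
  shows "\<bar>real (M div d - M div Suc d) - real M / (real d * (real d + 1))\<bar> \<le> 1"
proof -
  have le1: "M div Suc d \<le> M div d" by (rule div_le_mono2) (use assms in auto)
  have dec: "real M = real (M div d) * real d + real (M mod d)"
    by (metis of_nat_add of_nat_mult div_mult_mod_eq)
  have "real (M mod d) < real d" using assms by simp
  hence a1: "real (M div d) \<le> real M / real d" and a2: "real M / real d - 1 \<le> real (M div d)"
    using dec assms by (simp_all add: field_simps)
  have dec2: "real M = real (M div Suc d) * (real d + 1) + real (M mod Suc d)"
    by (metis of_nat_add of_nat_mult div_mult_mod_eq of_nat_Suc add.commute)
  have "real (M mod Suc d) < real d + 1"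
    by (metis mod_less_divisor of_nat_Suc of_nat_less_iff zero_less_Suc add.commute)
  hence b1: "real (M div Suc d) \<le> real M / (real d + 1)"
    and b2: "real M / (real d + 1) - 1 \<le> real (M div Suc d)"
    using dec2 by (simp_all add: field_simps)
  have eq: "real M / real d - real M / (real d + 1) = real M / (real d * (real d + 1))"
    using assms by (simp add: field_simps)
  have "real (M div d - M div Suc d) = real (M div d) - real (M div Suc d)" using le1 by simp
  thus ?thesis using a1 a2 b1 b2 eq by linarith
qed


lemma mangoldt_le_ln: "m \<le> M \<Longrightarrow> (mangoldt (m + 1) :: real) \<le> ln (real M + 1)"
proof -
  assume "m \<le> M"
  have "(mangoldt (m + 1) :: real) \<le> ln (real (m + 1))" by (rule mangoldt_le) simp
  also have "\<dots> \<le> ln (real M + 1)" using \<open>m \<le> M\<close> by simp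
  finally show ?thesis .
qed

lemma main_nat:
  assumes M1: "M \<ge> 1"
  shows "\<bar>Sf M - c0 * real M\<bar> \<le> 11 * (real M powr (1/3))^2 * ln (real M + 1)"
proof -
  define t where "t = real M powr (1/3)"
  define L where "L = ln (real M + 1)"
  have Mpos: "real M > 0" using M1 by simp
  have t1: "t \<ge> 1" unfolding t_def using M1 by (intro ge_one_powr_ge_zero) auto
  have t3: "t^3 = real M" unfolding t_def using Mpos by (simp add: powr_power)
  have L23: "L \<ge> 2/3"
  proof -
    have "ln 2 \<le> L" unfolding L_def using M1 by simp
    thus ?thesis using ln2_ge_two_thirds by linarith
  qed
  have t2le: "t^2 \<le> real M"
  proof -
    have "t^2 * 1 \<le> t^2 * t" using t1 by (intro mult_left_mono) auto
    thus ?thesis using t3 by (simp add: power3_eq_cube power2_eq_square)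
  qed
  define D where "D = nat \<lfloor>t^2\<rfloor>"
  have Dle: "real D \<le> t^2" unfolding D_def using t1 by simp
  have Dgt: "t^2 < real D + 1" unfolding D_def using t1 by linarith
  have DM: "D \<le> M" using Dle t2le by linarith
  define K where "K = M div Suc D"
  have KM: "K \<le> M" unfolding K_def by simp
  have Kle: "real K \<le> t"
  proof -
    have "real K * (real D + 1) \<le> real M"
    proof -
      have "K * Suc D \<le> M" unfolding K_def using times_div_less_eq_dividend[of "Suc D" M] by (simp add: mult.commute)
      hence "real (K * Suc D) \<le> real M" by linarith
      thus ?thesis by (simp add: algebra_simps)
    qed
    also have "real M = t * t^2" using t3 by (simp add: power3_eq_cube power2_eq_square)
    finally have "real K * (real D + 1) \<le> t * t^2" .
    also have "\<dots> \<le> t * (real D + 1)" using Dgt t1 by (intro mult_left_mono) auto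
    finally show ?thesis using Dgt t1 by simp
  qed
  define A where "A = (\<Sum>n\<in>{1..K}. (mangoldt (M div n + 1) :: real))"
  define B where "B = (\<Sum>d\<in>{1..D}. real (M div d - M div Suc d) * (mangoldt (d + 1) :: real))"
  define P where "P = (\<Sum>k<D. c0_term k)"
  have SAB: "Sf M = A + B"
    unfolding A_def B_def using split_Sf[OF KM] block[of M D] unfolding K_def by simp
  have A0: "A \<ge> 0" unfolding A_def by (intro sum_nonneg mangoldt_nonneg)
  have A1: "A \<le> real K * L"
  proof -
    have "A \<le> (\<Sum>n\<in>{1..K}. L)" unfolding A_def L_def
      by (intro sum_mono mangoldt_le_ln) simp
    thus ?thesis by simp
  qed
  have Pd: "P = (\<Sum>d\<in>{1..D}. mangoldt (d + 1) / (real d * (real d + 1)))"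
    unfolding P_def c0_term_def
    using sum.atLeast1_atMost_eq[of "\<lambda>d. mangoldt (d + 1) / (real d * (real d + 1))" D]
    by (simp add: add.commute)
  have BP: "\<bar>B - real M * P\<bar> \<le> real D * L"
  proof -
    have "B - real M * P = (\<Sum>d\<in>{1..D}. mangoldt (d + 1) *
        (real (M div d - M div Suc d) - real M / (real d * (real d + 1))))"
      unfolding B_def Pd sum_distrib_left sum_subtractf[symmetric]
      by (intro sum.cong refl) (simp add: algebra_simps)
    also have "\<bar>\<dots>\<bar> \<le> (\<Sum>d\<in>{1..D}. \<bar>mangoldt (d + 1) *
        (real (M div d - M div Suc d) - real M / (real d * (real d + 1)))\<bar>)"
      by (rule sum_abs)
    also have "\<dots> \<le> (\<Sum>d\<in>{1..D}. L)"
    proof (intro sum_mono)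
      fix d assume d: "d \<in> {1..D}"
      have "\<bar>mangoldt (d + 1) *
        (real (M div d - M div Suc d) - real M / (real d * (real d + 1)))\<bar>
        = mangoldt (d + 1) * \<bar>real (M div d - M div Suc d) - real M / (real d * (real d + 1))\<bar>"
        by (simp add: abs_mult mangoldt_nonneg)
      also have "\<dots> \<le> mangoldt (d + 1) * 1"
        using cd_bound[of d M] d by (intro mult_left_mono mangoldt_nonneg) auto
      also have "\<dots> \<le> L" unfolding L_def using d DM mangoldt_le_ln[of d M] by simp
      finally show "\<bar>mangoldt (d + 1) *
        (real (M div d - M div Suc d) - real M / (real d * (real d + 1)))\<bar> \<le> L" .
    qed
    finally show ?thesis by simp
  qed
  have tail: "0 \<le> c0 - P" "c0 - P \<le> 6 * gt D" using c0_tail[of D] unfolding P_def by auto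
  have gtD: "gt D \<le> 1 / t"
  proof -
    have "sqrt (t^2) \<le> sqrt (real D + 1)" using Dgt by (intro real_sqrt_le_mono) simp
    hence "t \<le> sqrt (real D + 1)" using t1 by simp
    thus ?thesis unfolding gt_def using t1 by (intro divide_left_mono) auto
  qed
  have T1: "real M * (c0 - P) \<le> 6 * t^2"
  proof -
    have "real M * (c0 - P) \<le> real M * (6 * (1 / t))"
      using tail gtD Mpos by (intro mult_left_mono) auto
    also have "\<dots> = 6 * t^2" using t3[symmetric] t1 by (simp add: power3_eq_cube power2_eq_square)
    finally show ?thesis .
  qed
  have eq: "Sf M - c0 * real M = A + (B - real M * P) - real M * (c0 - P)"
    using SAB by (simp add: algebra_simps)
  have "\<bar>Sf M - c0 * real M\<bar> \<le> real K * L + real D * L + 6 * t^2"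
    unfolding eq using A0 A1 BP T1 tail Mpos mult_nonneg_nonneg[of "real M" "c0 - P"] by linarith
  also have "\<dots> \<le> t^2 * L + t^2 * L + 9 * t^2 * L"
  proof -
    have L0: "L \<ge> 0" using L23 by simp
    have "real K * L \<le> t^2 * L"
      using Kle t1 L0 by (intro mult_right_mono) (auto simp: power2_eq_square intro: order.trans[OF _ mult_right_mono[of 1 t t]])
    moreover have "real D * L \<le> t^2 * L" using Dle L0 by (intro mult_right_mono) auto
    moreover have "6 * t^2 \<le> 9 * t^2 * L"
    proof -
      have "6 * t^2 \<le> (9 * L) * t^2" using L23 by (intro mult_right_mono) auto
      thus ?thesis by (simp add: mult_ac)
    qed
    ultimately show ?thesis by linarith
  qed
  finally show ?thesis unfolding t_def L_def by (simp add: mult_ac)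
qed



lemma ln_ratio:
  assumes "(2::nat)^k \<le> p^m" "m > 0"
  shows "real k / real m * ln 2 \<le> ln (real p)"
proof -
  have p0: "p > 0" using assms by (metis gr0I le_0_eq power_not_zero zero_neq_numeral zero_power)
  have h: "(2::real)^k \<le> real p ^ m" using assms(1) by (metis of_nat_le_iff of_nat_power of_nat_numeral)
  have "ln ((2::real)^k) \<le> ln (real p ^ m)" using h p0 by (subst ln_le_cancel_iff) auto
  hence "real k * ln 2 \<le> real m * ln (real p)" using p0 by (simp add: ln_realpow)
  thus ?thesis using assms(2) by (simp add: field_simps)
qed

lemma pr: "prime (2::nat)" "prime (3::nat)" "prime (5::nat)" "prime (7::nat)" "prime (11::nat)"
  "prime (13::nat)" "prime (17::nat)" "prime (19::nat)" "prime (23::nat)"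
  by code_simp+

lemma mv:
  "mangoldt (2::nat) = (ln 2::real)" "mangoldt (3::nat) = (ln 3::real)"
  "mangoldt (4::nat) = (ln 2::real)" "mangoldt (5::nat) = (ln 5::real)"
  "mangoldt (7::nat) = (ln 7::real)" "mangoldt (8::nat) = (ln 2::real)"
  "mangoldt (9::nat) = (ln 3::real)" "mangoldt (11::nat) = (ln 11::real)"
  "mangoldt (13::nat) = (ln 13::real)" "mangoldt (16::nat) = (ln 2::real)"
  "mangoldt (17::nat) = (ln 17::real)" "mangoldt (19::nat) = (ln 19::real)"
  "mangoldt (23::nat) = (ln 23::real)"
  using pr mangoldt_primepow'[where 'a=real, of 2 2] mangoldt_primepow'[where 'a=real, of 2 3]
    mangoldt_primepow'[where 'a=real, of 3 2] mangoldt_primepow'[where 'a=real, of 2 4]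
  by (simp_all add: mangoldt_prime)

lemma mv2: "mangoldt (Suc (Suc 0)) = (ln 2::real)" "mangoldt (Suc (Suc (Suc 0))) = (ln 3::real)"
  by (metis mv(1) numeral_2_eq_2) (metis mv(2) numeral_3_eq_3)

lemma lb: "3/2 * ln 2 \<le> ln (3::real)" "9/4 * ln 2 \<le> ln (5::real)" "11/4 * ln 2 \<le> ln (7::real)"
  "10/3 * ln 2 \<le> ln (11::real)" "11/3 * ln 2 \<le> ln (13::real)" "4 * ln 2 \<le> ln (17::real)"
  "4 * ln 2 \<le> ln (19::real)" "9/2 * ln 2 \<le> ln (23::real)"
  using ln_ratio[of 3 3 2] ln_ratio[of 9 5 4] ln_ratio[of 11 7 4] ln_ratio[of 10 11 3]
    ln_ratio[of 11 13 3] ln_ratio[of 4 17 1] ln_ratio[of 4 19 1] ln_ratio[of 9 23 2]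
  by simp_all

lemma c0_lower: "c0 \<ge> 0.7553658"
proof -
  define S where "S = {0,1,2,3,5,6,7,9,11,14,15,17,21::nat}"
  have "sum c0_term S \<le> c0"
    unfolding c0_def S_def by (rule sum_le_suminf[OF summable_c0]) (auto simp: c0_term_nonneg)
  moreover have "sum c0_term S = ln 2 / 2 + ln 3 / 6 + ln 2 / 12 + ln 5 / 20 + ln 7 / 42
     + ln 2 / 56 + ln 3 / 72 + ln 11 / 110 + ln 13 / 156 + ln 2 / 240 + ln 17 / 272
     + ln 19 / 342 + ln 23 / 506"
    unfolding S_def c0_term_def by (simp add: mv mv2)
  moreover have "(ln 2::real) / 2 + ln 3 / 6 + ln 2 / 12 + ln 5 / 20 + ln 7 / 42
     + ln 2 / 56 + ln 3 / 72 + ln 11 / 110 + ln 13 / 156 + ln 2 / 240 + ln 17 / 272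
     + ln 19 / 342 + ln 23 / 506 \<ge> ln 2 * (1/2 + 3/2/6 + 1/12 + 9/4/20 + 11/4/42 + 1/56 + 3/2/72
     + 10/3/110 + 11/3/156 + 1/240 + 4/272 + 4/342 + 9/2/506)"
    using lb by (simp add: algebra_simps)
  moreover have "ln 2 * (1/2 + 3/2/6 + 1/12 + 9/4/20 + 11/4/42 + 1/56 + 3/2/72
     + 10/3/110 + 11/3/156 + 1/240 + 4/272 + 4/342 + 9/2/506::real) \<ge> (2/3::real) * (1/2 + 3/2/6 + 1/12 + 9/4/20 + 11/4/42 + 1/56 + 3/2/72
     + 10/3/110 + 11/3/156 + 1/240 + 4/272 + 4/342 + 9/2/506)"
    using ln2_ge_two_thirds by (intro mult_right_mono) auto
  ultimately show ?thesis by simp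
qed


lemma floor_eq: "n \<ge> 1 \<Longrightarrow> x \<ge> 0 \<Longrightarrow> nat \<lfloor>x / real n\<rfloor> = nat \<lfloor>x\<rfloor> div n"
proof -
  assume n: "n \<ge> 1" and x: "x \<ge> 0"
  have "\<lfloor>x / real_of_int (int n)\<rfloor> = \<lfloor>x\<rfloor> div int n" by (rule floor_divide_real_eq_div) simp
  hence "\<lfloor>x / real n\<rfloor> = \<lfloor>x\<rfloor> div int n" by simp
  hence "nat \<lfloor>x / real n\<rfloor> = nat (\<lfloor>x\<rfloor> div int n)" by simp
  also have "\<dots> = nat \<lfloor>x\<rfloor> div nat (int n)" using x by (intro nat_div_distrib) simp
  finally show ?thesis by simp
qed

lemma bound_real:
  assumes x: "x \<ge> 1"
  shows "\<bar>(\<Sum>n\<in>{1..nat \<lfloor>x\<rfloor>}. (mangoldt (nat \<lfloor>x / real n\<rfloor> + 1) :: real)) - c0 * x\<bar>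
         \<le> 11 * (x powr (1/3))^2 * ln (x + 1) + c0"
proof -
  define M where "M = nat \<lfloor>x\<rfloor>"
  have M1: "M \<ge> 1" unfolding M_def using x by linarith
  have Mx: "real M \<le> x" "x < real M + 1" unfolding M_def using x by linarith+
  have "(\<Sum>n\<in>{1..M}. (mangoldt (nat \<lfloor>x / real n\<rfloor> + 1) :: real)) = Sf M"
    unfolding Sf_def using x by (intro sum.cong refl) (auto simp: floor_eq M_def)
  hence eq: "(\<Sum>n\<in>{1..M}. (mangoldt (nat \<lfloor>x / real n\<rfloor> + 1) :: real)) - c0 * x
      = (Sf M - c0 * real M) - c0 * (x - real M)" by (simp add: algebra_simps)
  have "\<bar>Sf M - c0 * real M\<bar> \<le> 11 * (real M powr (1/3))^2 * ln (real M + 1)" by (rule main_nat[OF M1])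
  also have "\<dots> \<le> 11 * (x powr (1/3))^2 * ln (x + 1)"
  proof -
    have "real M powr (1/3) \<le> x powr (1/3)" using Mx by (intro powr_mono2) auto
    hence "(real M powr (1/3))^2 \<le> (x powr (1/3))^2" by (intro power_mono) auto
    moreover have "ln (real M + 1) \<le> ln (x + 1)" using Mx M1 by simp
    moreover have "ln (real M + 1) \<ge> 0" by simp
    ultimately show ?thesis by (intro mult_mono mult_left_mono) auto
  qed
  finally have b1: "\<bar>Sf M - c0 * real M\<bar> \<le> 11 * (x powr (1/3))^2 * ln (x + 1)" .
  have "\<bar>x - real M\<bar> \<le> 1" using Mx by linarith
  hence b2: "\<bar>c0 * (x - real M)\<bar> \<le> c0" using c0_nonneg by (simp add: abs_mult mult_left_le)
  show ?thesis unfolding M_def[symmetric] eq using b1 b2 by linarith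
qed

theorem theorem1p1:
  fixes \<epsilon> :: real
  assumes "\<epsilon> > 0"
  shows "(\<lambda>x::real. (\<Sum>n\<in>{1..nat \<lfloor>x\<rfloor>}. (mangoldt (nat \<lfloor>x / real n\<rfloor> + 1) :: real)) - c0 * x)
           \<in> O[at_top](\<lambda>x. x powr ((2 + \<epsilon>) / 3) * (ln x) ^ 2)
         \<and> summable c0_term \<and> c0 \<ge> 0.7553658"
proof (intro conjI summable_c0 c0_lower)
  define h where "h = (\<lambda>x::real. 11 * (x powr (1/3))^2 * ln (x + 1) + c0)"
  have 1: "(\<lambda>x::real. (\<Sum>n\<in>{1..nat \<lfloor>x\<rfloor>}. (mangoldt (nat \<lfloor>x / real n\<rfloor> + 1) :: real)) - c0 * x)
      \<in> O[at_top](h)"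
  proof (rule bigoI[where c = 1])
    show "eventually (\<lambda>x. norm ((\<Sum>n\<in>{1..nat \<lfloor>x\<rfloor>}. (mangoldt (nat \<lfloor>x / real n\<rfloor> + 1) :: real)) - c0 * x)
        \<le> 1 * norm (h x)) at_top"
      using eventually_ge_at_top[of "1::real"]
    proof eventually_elim
      case (elim x)
      thus ?case using bound_real[OF elim] unfolding h_def by simp
    qed
  qed
  have 2: "h \<in> O[at_top](\<lambda>x. x powr ((2 + \<epsilon>) / 3) * (ln x) ^ 2)"
    unfolding h_def using assms by real_asymp
  show "(\<lambda>x::real. (\<Sum>n\<in>{1..nat \<lfloor>x\<rfloor>}. (mangoldt (nat \<lfloor>x / real n\<rfloor> + 1) :: real)) - c0 * x)
           \<in> O[at_top](\<lambda>x. x powr ((2 + \<epsilon>) / 3) * (ln x) ^ 2)"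
    by (rule landau_o.big_trans[OF 1 2])
qed


end
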